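(* Let $\Delta:\mathbb N\to\mathbb N$ be a function, and let $\eta\in(0,1)$ and $C$ be constants such that for every $n\in\mathbb N$ there exist $\ell,m\in\mathbb N$ with $\ell+m\le\eta n+C$ and $\Delta(n)\le\Delta(\ell)+\Delta(m)$. Set $\alpha=\log(2)/\log(2/\eta)$. Then $\Delta(n)\preceq n^\alpha$.
   Context: For functions $f,g:\mathbb N\to\mathbb R_+$, write $g\preceq f$ if there is $C'>0$ with $g(n)\le f(C'n)$ for all sufficiently large $n$. *)

theory Defs
  imports Complex_Main
begin

text \<open>Growth preorder: g is dominated by f if there is C' > 0 with
  g n \<le> f (C' n) for all sufficiently large n.  The function f is given on
  the reals so that f (C' n) makes sense for real C'.\<close>
definition preceq :: "(nat \<Rightarrow> real) \<Rightarrow> (real \<Rightarrow> real) \<Rightarrow> bool" where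
  "preceq g f \<longleftrightarrow> (\<exists>C'>0. eventually (\<lambda>n. g n \<le> f (C' * real n)) sequentially)"

end

theory Submission
  imports Defs "HOL-Analysis.Analysis" "HOL-Real_Asymp.Real_Asymp"
begin

lemma jensen2:
  fixes a b \<alpha> :: real
  assumes "a > 0" "b > 0" "0 < \<alpha>" "\<alpha> < 1"
  shows "a powr \<alpha> + b powr \<alpha> \<le> 2 * ((a + b) / 2) powr \<alpha>"
proof -
  define m where "m = (a + b) / 2"
  have m: "m > 0" using assms by (simp add: m_def)
  have y1: "a powr \<alpha> * m powr (1 - \<alpha>) \<le> \<alpha> * a + (1 - \<alpha>) * m"
    using Youngs_inequality_0[of \<alpha> "1 - \<alpha>" a m] assms m by simp
  have y2: "b powr \<alpha> * m powr (1 - \<alpha>) \<le> \<alpha> * b + (1 - \<alpha>) * m"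
    using Youngs_inequality_0[of \<alpha> "1 - \<alpha>" b m] assms m by simp
  have "(a powr \<alpha> + b powr \<alpha>) * m powr (1 - \<alpha>) \<le> 2 * m"
    using y1 y2 unfolding m_def by (simp add: distrib_right) argo
  also have "2 * m = 2 * m powr \<alpha> * m powr (1 - \<alpha>)"
    using m by (simp add: powr_add[symmetric])
  finally have "(a powr \<alpha> + b powr \<alpha>) * m powr (1 - \<alpha>) \<le> (2 * m powr \<alpha>) * m powr (1 - \<alpha>)" .
  then show ?thesis using m by (simp add: m_def)
qed

theorem lemma4p3:
  fixes \<Delta> :: "nat \<Rightarrow> nat" and \<eta> C :: real
  assumes "0 < \<eta>" and "\<eta> < 1"
    and "\<And>n. \<exists>l m. real (l + m) \<le> \<eta> * real n + C \<and> \<Delta> n \<le> \<Delta> l + \<Delta> m"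
  shows "preceq (\<lambda>n. real (\<Delta> n)) (\<lambda>x. x powr (ln 2 / ln (2 / \<eta>)))"
proof -
  define \<alpha> where "\<alpha> = ln 2 / ln (2 / \<eta>)"
  define C0 where "C0 = max C 0"
  have C0: "C0 \<ge> 0" "C \<le> C0" by (auto simp: C0_def)
  have "2 < 2 / \<eta>" using assms(1,2) by (simp add: field_simps)
  hence lt: "ln 2 < ln (2 / \<eta>)" using assms(1) by (intro ln_less_cancel_iff[THEN iffD2]) auto
  have ln2pos: "ln 2 > (0::real)" by simp
  have a0: "0 < \<alpha>" "\<alpha> < 1" proof -
    have "ln (2 / \<eta>) > 0" using lt ln2pos by linarith
    thus "0 < \<alpha>" "\<alpha> < 1" using lt ln2pos unfolding \<alpha>_def by (auto intro: divide_pos_pos simp del: ln_gt_zero_iff ln_less_cancel_iff)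
  qed
  have key: "(2 / \<eta>) powr \<alpha> = 2"
  proof -
    have "(2 / \<eta>) powr \<alpha> = exp (\<alpha> * ln (2 / \<eta>))" using assms(1) by (simp add: powr_def)
    also have "\<alpha> * ln (2 / \<eta>) = ln 2" proof -
      have "ln (2 / \<eta>) \<noteq> 0" using lt ln2pos by linarith
      thus ?thesis by (simp add: \<alpha>_def)
    qed
    finally show ?thesis by simp
  qed
  define K where "K = (C0 + 2) / \<eta>"
  have K: "K > 0" using C0 assms(1) by (simp add: K_def)
  have lim: "((\<lambda>n::nat. (real n + K) powr \<alpha> - (real n + 1) powr \<alpha>) \<longlongrightarrow> 0) sequentially"
    using K a0 by real_asymp
  have ev1: "eventually (\<lambda>n. (real n + K) powr \<alpha> - (real n + 1) powr \<alpha> < 1/2) sequentially"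
    using order_tendstoD(2)[OF lim, of "1/2"] by simp
  have ev2: "eventually (\<lambda>n::nat. real n > C0 / (1 - \<eta>)) sequentially"
    by real_asymp
  obtain N1 where N1: "\<And>n. n \<ge> N1 \<Longrightarrow> (real n + K) powr \<alpha> - (real n + 1) powr \<alpha> < 1/2 \<and> real n > C0 / (1 - \<eta>)"
    using eventually_conj[OF ev1 ev2] unfolding eventually_sequentially by blast
  define M where "M = Max (\<Delta> ` {..N1})"
  define A :: real where "A = 2 * real M + 2"
  have A: "A > 0" by (simp add: A_def)
  define f where "f n = A * ((real n + 1) powr \<alpha> - 1/2)" for n :: nat
  have bound: "real (\<Delta> n) \<le> f n" for n
  proof (induction n rule: less_induct)
    case (less n)
    show ?case
    proof (cases "n \<le> N1")
      case True
      have "\<Delta> n \<le> M" unfolding M_def using True by (intro Max_ge) auto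
      moreover have "(real n + 1) powr \<alpha> \<ge> 1" using a0 by (intro ge_one_powr_ge_zero) auto
      ultimately have "real (\<Delta> n) \<le> A * (1/2)" by (simp add: A_def)
      also have "\<dots> \<le> f n" unfolding f_def using A \<open>(real n + 1) powr \<alpha> \<ge> 1\<close>
        by (intro mult_left_mono) auto
      finally show ?thesis .
    next
      case False
      hence nN: "n \<ge> N1" by simp
      obtain l m where lm: "real (l + m) \<le> \<eta> * real n + C" "\<Delta> n \<le> \<Delta> l + \<Delta> m"
        using assms(3) by blast
      have "real n > C0 / (1 - \<eta>)" using N1[OF nN] by blast
      hence "C0 < real n * (1 - \<eta>)" using assms(2) by (simp add: field_simps)
      hence "real (l + m) < real n" using lm(1) C0 by (simp add: algebra_simps)
      hence ll: "l < n" "m < n" by auto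
      have "real (\<Delta> n) \<le> f l + f m" using lm(2) less[OF ll(1)] less[OF ll(2)] by linarith
      also have "f l + f m = A * (((real l + 1) powr \<alpha> + (real m + 1) powr \<alpha>) - 1)"
        by (simp add: f_def algebra_simps)
      also have "\<dots> \<le> A * (2 * ((real l + 1 + (real m + 1)) / 2) powr \<alpha> - 1)"
        using A jensen2[of "real l + 1" "real m + 1" \<alpha>] a0 by (intro mult_left_mono) auto
      also have "\<dots> \<le> A * (2 * ((\<eta> * real n + C0) / 2 + 1) powr \<alpha> - 1)"
      proof -
        have "(real l + 1 + (real m + 1)) / 2 \<le> (\<eta> * real n + C0) / 2 + 1"
          using lm(1) C0 by simp
        hence "((real l + 1 + (real m + 1)) / 2) powr \<alpha> \<le> ((\<eta> * real n + C0) / 2 + 1) powr \<alpha>"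
          using a0 by (intro powr_mono2) auto
        thus ?thesis using A by (intro mult_left_mono) auto
      qed
      also have "2 * ((\<eta> * real n + C0) / 2 + 1) powr \<alpha> = (real n + K) powr \<alpha>"
      proof -
        have "(real n + K) = (2 / \<eta>) * ((\<eta> * real n + C0) / 2 + 1)"
          using assms(1) by (simp add: K_def field_simps)
        hence "(real n + K) powr \<alpha> = (2 / \<eta>) powr \<alpha> * ((\<eta> * real n + C0) / 2 + 1) powr \<alpha>"
        proof -
          have "0 \<le> (\<eta> * real n + C0) / 2 + 1" using assms(1) C0 by simp
          moreover have "0 \<le> 2 / \<eta>" using assms(1) by simp
          ultimately show ?thesis using powr_mult[of "2 / \<eta>" "(\<eta> * real n + C0) / 2 + 1" \<alpha>]
            by (metis \<open>real n + K = _\<close>)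
        qed
        thus ?thesis using key by simp
      qed
      also have "A * ((real n + K) powr \<alpha> - 1) \<le> f n"
        unfolding f_def using N1[OF nN] A by (intro mult_left_mono) auto
      finally show ?thesis .
    qed
  qed
  define C' where "C' = 2 * A powr (1 / \<alpha>)"
  have C'pos: "C' > 0" using A by (simp add: C'_def)
  have "eventually (\<lambda>n. real (\<Delta> n) \<le> (C' * real n) powr \<alpha>) sequentially"
    unfolding eventually_sequentially
  proof (intro exI allI impI)
    fix n :: nat assume "n \<ge> 1"
    have "real (\<Delta> n) \<le> A * (real n + 1) powr \<alpha>" using bound[of n] A by (simp add: f_def algebra_simps)
    also have "\<dots> \<le> A * (2 * real n) powr \<alpha>"
      using \<open>n \<ge> 1\<close> A a0 by (intro mult_left_mono powr_mono2) auto
    also have "\<dots> = (A powr (1 / \<alpha>)) powr \<alpha> * (2 * real n) powr \<alpha>"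
      using A a0 by (simp add: powr_powr)
    also have "\<dots> = (C' * real n) powr \<alpha>"
      using A by (simp add: C'_def powr_mult[symmetric] mult_ac)
    finally show "real (\<Delta> n) \<le> (C' * real n) powr \<alpha>" .
  qed
  thus ?thesis unfolding preceq_def \<alpha>_def[symmetric] using C'pos by blast
qed

end
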